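(* Let $p>3$ be a prime and $\delta\in\{\pm1\}$. If $p\equiv1\pmod4$, then $$T_p(2,5\delta,2)\equiv(-1)^{\lfloor(p+11)/12\rfloor}\pmod p.$$ If $p\equiv3\pmod4$, then $$T_p(2,5\delta,2)\equiv\left(\frac{6}{p}\right)\frac{\delta\,2^\delta}{3^\delta}\binom{(p-3)/2}{(p-3)/4}^{-2\delta}\pmod p.$$
   Context: $\left(\frac{\cdot}{p}\right)$ denotes the Legendre symbol. For an odd prime $p$ and $a,b,c\in\mathbb{Z}$, $T_p(a,b,c)=\prod_{i,j=1,\ p\nmid ai^2+bij+cj^2}^{(p-1)/2}(ai^2+bij+cj^2)$. Negative powers and fractions are interpreted as inverses modulo $p$. *)

theory Defs
  imports "HOL-Number_Theory.Number_Theory"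
begin

definition qf :: "int \<Rightarrow> int \<Rightarrow> int \<Rightarrow> int \<Rightarrow> int \<Rightarrow> int" where
  "qf a b c i j = a * i^2 + b * i * j + c * j^2"

definition T :: "nat \<Rightarrow> int \<Rightarrow> int \<Rightarrow> int \<Rightarrow> int" where
  "T p a b c =
     (\<Prod>(i,j) \<in> {(i,j). i \<in> {1..(p-1) div 2} \<and> j \<in> {1..(p-1) div 2}
                        \<and> \<not> int p dvd qf a b c (int i) (int j)}.
        qf a b c (int i) (int j))"

end

theory Submission
  imports Defs "HOL-Number_Theory.Number_Theory"
begin

lemma prod_int_fact: "(\<Prod>j\<in>{1..n}. int j) = fact n"
  by (induction n) (auto simp: atLeastAtMostSuc_conv)

lemma fact_shift: "(fact (a+b)::int) = fact a * (\<Prod>j\<in>{1..b}. int (a+j))"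
  by (induction b) (auto simp: atLeastAtMostSuc_conv algebra_simps)

lemma odd_prod: "(\<Prod>k\<in>{1..m}. int (2*k-1)) * 2^m * fact m = (fact (2*m) :: int)"
proof (induction m)
  case 0 then show ?case by simp
next
  case (Suc m)
  have e: "2 * Suc m = Suc (Suc (2*m))" by simp
  have "(\<Prod>k\<in>{1..Suc m}. int (2*k-1)) * 2^Suc m * fact (Suc m)
     = ((\<Prod>k\<in>{1..m}. int (2*k-1)) * 2^m * fact m) * (int (2*m+1) * (2 * (int m + 1)))"
    by (simp add: atLeastAtMostSuc_conv algebra_simps)
  also have "\<dots> = fact (2*m) * (int (2*m+1) * (2 * (int m + 1)))" using Suc by simp
  also have "\<dots> = fact (2 * Suc m)" unfolding e by (simp add: algebra_simps)
  finally show ?case .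
qed

lemma neg_prod: "(\<Prod>j\<in>A. - (f j::int)) = (-1)^card A * prod f A"
  by (induction A rule: infinite_finite_induct) auto

lemma fact_half_sq:
  assumes "prime p" "odd p"
  shows "[(fact ((p-1) div 2))^2 = ((-1::int)^((p-1) div 2 + 1))] (mod int p)"
proof -
  define h where "h = (p-1) div 2"
  have ph: "p - 1 = h + h" "p = 2*h+1" using assms h_def by (auto elim: oddE)
  have e1: "(fact (p-1)::int) = fact h * (\<Prod>j\<in>{1..h}. int (h+j))"
    unfolding ph(1) by (rule fact_shift)
  have e2: "(\<Prod>j\<in>{1..h}. int (h+j)) = (\<Prod>j\<in>{1..h}. int (h+(h+1-j)))"
    by (rule prod.atLeastAtMost_rev)
  have e3: "[(\<Prod>j\<in>{1..h}. int (h+(h+1-j))) = (\<Prod>j\<in>{1..h}. - int j)] (mod int p)"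
  proof (rule cong_prod)
    fix j assume "j \<in> {1..h}"
    then have "int (h+(h+1-j)) = int p + (- int j)" using ph by auto
    then show "[int (h+(h+1-j)) = - int j] (mod int p)"
      by (simp add: cong_def)
  qed
  have e4: "(\<Prod>j\<in>{1..h}. - int j) = (-1)^h * fact h"
    by (subst neg_prod, subst prod_int_fact, simp)
  have c: "[fact (p-1) = fact h * ((-1)^h * fact h)] (mod int p)"
    unfolding e1 e2 e4[symmetric] by (rule cong_mult[OF cong_refl e3])
  have w: "[fact (p-1) = (-1::int)] (mod int p)"
    using wilson_theorem[OF assms(1)] .
  have "[(-1)^h * (fact h * ((-1)^h * fact h)) = (-1)^h * (-1::int)] (mod int p)"
    using cong_mult[OF cong_refl cong_trans[OF cong_sym[OF c] w]] .
  moreover have "(-1)^h * (fact h * ((-1)^h * fact h)) = (fact h::int)^2"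
    by (simp add: power2_eq_square algebra_simps flip: power_add mult_2)
  moreover have "(-1)^h * (-1::int) = (-1)^(h+1)" by simp
  ultimately show ?thesis unfolding h_def by simp
qed


lemma lin_bij:
  assumes "prime p" "\<not> int p dvd c"
  shows "bij_betw (\<lambda>j. (a + c * int j) mod int p) {0..<p} {0..<int p}"
proof -
  let ?f = "\<lambda>j. (a + c * int j) mod int p"
  have p0: "p > 0" using assms prime_gt_0_nat by blast
  have inj: "inj_on ?f {0..<p}"
  proof (rule inj_onI)
    fix x y assume x: "x \<in> {0..<p}" and y: "y \<in> {0..<p}" and e: "?f x = ?f y"
    then have "int p dvd (a + c*int x) - (a + c * int y)"
      by (simp add: mod_eq_dvd_iff)
    then have "int p dvd c * (int x - int y)" by (simp add: algebra_simps)
    then have "int p dvd (int x - int y)"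
      using assms prime_dvd_mult_iff[of "int p"] by (simp add: prime_nat_iff_prime)
    moreover have "\<bar>int x - int y\<bar> < int p" using x y by auto
    ultimately have "int x - int y = 0"
      using dvd_imp_le_int[of "int x - int y" "int p"] by fastforce
    then show "x = y" by simp
  qed
  have sub: "?f ` {0..<p} \<subseteq> {0..<int p}" using p0 by auto
  have "card (?f ` {0..<p}) = card {0..<int p}"
    using card_image[OF inj] by simp
  then have "?f ` {0..<p} = {0..<int p}"
    using card_subset_eq[OF _ sub] by simp
  then show ?thesis using inj unfolding bij_betw_def by blast
qed

lemma lin_prod:
  assumes "prime p" "\<not> int p dvd c"
  shows "[(\<Prod>j\<in>{j\<in>{0..<p}. \<not> int p dvd a + c * int j}. a + c * int j) = -1] (mod int p)"
proof -
  let ?f = "\<lambda>j. (a + c * int j) mod int p"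
  let ?J = "{j\<in>{0..<p}. \<not> int p dvd a + c * int j}"
  have b: "bij_betw ?f {0..<p} {0..<int p}" using lin_bij[OF assms] .
  have inj: "inj_on ?f ?J" using b unfolding bij_betw_def by (auto intro: inj_on_subset)
  have "?f ` ?J = {k \<in> ?f ` {0..<p}. k \<noteq> 0}" by (auto simp: dvd_eq_mod_eq_0)
  also have "\<dots> = {1..<int p}" using b unfolding bij_betw_def by auto
  finally have im: "?f ` ?J = {1..<int p}" .
  have c1: "[(\<Prod>j\<in>?J. a + c * int j) = (\<Prod>j\<in>?J. ?f j)] (mod int p)"
    by (rule cong_prod) (simp add: cong_def)
  have "(\<Prod>j\<in>?J. ?f j) = (\<Prod>k\<in>?f ` ?J. k)" by (subst prod.reindex[OF inj]) simp
  also have "\<dots> = (\<Prod>k\<in>{1..<int p}. k)" using im by simp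
  also have "{1..<int p} = int ` {1..<p}" by (simp add: image_int_atLeastLessThan)
  also have "(\<Prod>k\<in>int ` {1..<p}. k) = (\<Prod>j\<in>{1..<p}. int j)" by (simp add: prod.reindex)
  also have "(\<Prod>j\<in>{1..<p}. int j) = fact (p-1)"
  proof -
    have "{1..<p} = {1..p-1}" using assms prime_gt_0_nat by auto
    then show ?thesis using prod_int_fact by simp
  qed
  finally have e: "(\<Prod>j\<in>?J. ?f j) = fact (p-1)" .
  show ?thesis using cong_trans[OF c1[unfolded e] wilson_theorem[OF assms(1)]] .
qed

lemma lin_zero:
  assumes "prime p" "\<not> int p dvd c"
  obtains j0 where "j0 < p" "{j\<in>{0..<p}. int p dvd a + c * int j} = {j0}"
proof -
  let ?f = "\<lambda>j. (a + c * int j) mod int p"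
  have b: "bij_betw ?f {0..<p} {0..<int p}" using lin_bij[OF assms] .
  then have inj: "inj_on ?f {0..<p}" and im: "?f ` {0..<p} = {0..<int p}"
    unfolding bij_betw_def by auto
  have "(0::int) \<in> {0..<int p}" using assms prime_gt_0_nat by auto
  then have "0 \<in> ?f ` {0..<p}" using im by simp
  then obtain j0 where j0x: "j0 \<in> {0..<p}" "0 = ?f j0" by (rule imageE)
  then have j0: "j0 \<in> {0..<p}" "?f j0 = 0" by auto
  have "{j\<in>{0..<p}. int p dvd a + c * int j} = {j0}"
  proof
    show "{j0} \<subseteq> {j\<in>{0..<p}. int p dvd a + c * int j}" using j0 by (auto simp: dvd_eq_mod_eq_0)
    show "{j\<in>{0..<p}. int p dvd a + c * int j} \<subseteq> {j0}"
    proof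
      fix j assume "j \<in> {j\<in>{0..<p}. int p dvd a + c * int j}"
      then have j: "j \<in> {0..<p}" "?f j = ?f j0" using j0 by (auto simp: dvd_eq_mod_eq_0)
      have "j = j0" using inj_onD[OF inj j(2) j(1) j0(1)] .
      then show "j \<in> {j0}" by simp
    qed
  qed
  then show ?thesis using j0 by (intro that) auto
qed


lemma p_not_dvd_small:
  assumes "prime p" "p > 3"
  shows "\<not> int p dvd 2" "\<not> int p dvd 3" "\<not> int p dvd 6" "\<not> int p dvd 9"
proof -
  have pr: "prime (int p)" using assms by simp
  show a: "\<not> int p dvd 2" using assms zdvd_imp_le[of "int p" 2] by auto
  show b: "\<not> int p dvd 3" using assms zdvd_imp_le[of "int p" 3] by auto
  show "\<not> int p dvd 6" using a b prime_dvd_mult_iff[OF pr, of 2 3] by auto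
  show "\<not> int p dvd 9" using b prime_dvd_mult_iff[OF pr, of 3 3] by auto
qed

lemma row_lemma:
  fixes x :: int
  assumes pp: "prime p" and p3: "p > 3" and nx: "\<not> int p dvd x"
  shows "[9 * x^4 * (\<Prod>j\<in>{j\<in>{1..p-1}. \<not> int p dvd (2*x + int j)*(x + 2*int j)}.
            (2*x + int j)*(x + 2*int j)) = -1] (mod int p)"
proof -
  define n where "n = int p"
  have pr: "prime n" using pp n_def by simp
  have nxn: "\<not> n dvd x" using nx n_def by simp
  have n2: "\<not> n dvd 2" and n3: "\<not> n dvd 3" using p_not_dvd_small[OF pp p3] n_def by auto
  have n1: "\<not> n dvd 1" using p3 unfolding n_def by simp
  define u where "u = (\<lambda>j::nat. 2*x + int j)"
  define v where "v = (\<lambda>j::nat. x + 2*int j)"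
  define J where "J = {j\<in>{1..p-1}. \<not> n dvd u j * v j}"
  define J0 where "J0 = {j\<in>{0..<p}. \<not> n dvd u j \<and> \<not> n dvd v j}"
  define U where "U = {j\<in>{0..<p}. \<not> n dvd u j}"
  define V where "V = {j\<in>{0..<p}. \<not> n dvd v j}"
  have both: "\<not> (n dvd u j \<and> n dvd v j)" for j
  proof
    assume "n dvd u j \<and> n dvd v j"
    then have "n dvd 2 * u j - v j" by auto
    moreover have "2 * u j - v j = 3 * x" unfolding u_def v_def by simp
    ultimately have "n dvd 3 * x" by simp
    then show False using prime_dvd_mult_iff[OF pr] n3 nxn n_def by auto
  qed
  obtain jv where jv: "jv < p" "{j\<in>{0..<p}. n dvd x + 2 * int j} = {jv}"
    using lin_zero[OF pp, of 2 x] n2 n_def by auto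
  obtain ju where ju: "ju < p" "{j\<in>{0..<p}. n dvd 2*x + 1 * int j} = {ju}"
    using lin_zero[OF pp, of 1 "2*x"] n1 n_def by auto
  have vjv: "n dvd v jv" using jv unfolding v_def by auto
  have uju: "n dvd u ju" using ju unfolding u_def by auto
  have U_eq: "U = insert jv J0" and jvJ0: "jv \<notin> J0"
    using jv both vjv unfolding U_def J0_def v_def u_def by auto
  have V_eq: "V = insert ju J0" and juJ0: "ju \<notin> J0"
    using ju both uju unfolding V_def J0_def v_def u_def by auto
  have J0_eq: "J0 = insert 0 J" and zJ: "0 \<notin> J"
  proof -
    have u0: "\<not> n dvd u 0" using nxn n2 prime_dvd_mult_iff[OF pr, of 2 x] unfolding u_def by auto
    have v0: "\<not> n dvd v 0" using nxn unfolding v_def by auto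
    have "p > 0" using p3 by auto
    then show "J0 = insert 0 J"
      using u0 v0 prime_dvd_mult_iff[OF pr] unfolding J0_def J_def by auto
    show "0 \<notin> J" unfolding J_def by auto
  qed
  have fin: "finite J" "finite J0" unfolding J_def J0_def by auto
  have PU: "[prod u U = -1] (mod n)"
    using lin_prod[OF pp, of 1 "2*x"] n1 n_def unfolding U_def u_def by simp
  have PV: "[prod v V = -1] (mod n)"
    using lin_prod[OF pp, of 2 x] n2 n_def unfolding V_def v_def by simp
  have eU: "prod u U = u jv * (u 0 * prod u J)"
    using U_eq jvJ0 J0_eq zJ fin by simp
  have eV: "prod v V = v ju * (v 0 * prod v J)"
    using V_eq juJ0 J0_eq zJ fin by simp
  define R where "R = (\<Prod>j\<in>J. u j * v j)"
  have eR: "R = prod u J * prod v J" unfolding R_def by (rule prod.distrib)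
  have c1: "[2 * u jv = 3 * x] (mod n)"
  proof -
    have "2 * u jv = 3 * x + v jv" unfolding u_def v_def by simp
    moreover have "[3 * x + v jv = 3 * x + 0] (mod n)"
      using vjv by (intro cong_add) (auto simp: cong_0_iff)
    ultimately show ?thesis by simp
  qed
  have c2: "[v ju = - 3 * x] (mod n)"
  proof -
    have "v ju = 2 * u ju + (- 3 * x)" unfolding u_def v_def by simp
    moreover have "[2 * u ju + (- 3 * x) = 2 * 0 + (- 3 * x)] (mod n)"
      using uju by (intro cong_add cong_mult) (auto simp: cong_0_iff)
    ultimately show ?thesis by simp
  qed
  have e1: "2 * prod u U * prod v V = (2 * u jv) * v ju * (u 0 * v 0 * R)"
    unfolding eU eV eR by (simp add: algebra_simps)
  have c3: "[(2 * u jv) * v ju * (u 0 * v 0 * R) = (3 * x) * (- 3 * x) * (u 0 * v 0 * R)] (mod n)"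
    by (intro cong_mult c1 c2 cong_refl)
  have e2: "(3 * x) * (- 3 * x) * (u 0 * v 0 * R) = 2 * (- (9 * x^4 * R))"
    unfolding u_def v_def by (simp add: algebra_simps power4_eq_xxxx)
  have a: "[2 * prod u U * prod v V = 2 * (- (9 * x^4 * R))] (mod n)"
    using c3 by (simp only: e1 e2)
  have b: "[2 * prod u U * prod v V = 2 * (-1) * (-1)] (mod n)"
    by (intro cong_mult PU PV cong_refl)
  have "[2 * (- (9 * x^4 * R)) = 2 * 1] (mod n)"
    using cong_trans[OF cong_sym[OF a] b] by simp
  then have "[- (9 * x^4 * R) = 1] (mod n)"
    using cong_mult_lcancel[of 2 n] n2 pr
    by (metis prime_imp_coprime coprime_commute)
  then have "[- (- (9 * x^4 * R)) = - 1] (mod n)" by (rule cong_minus_minus_iff[THEN iffD2])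
  then show ?thesis unfolding R_def J_def u_def v_def n_def by simp
qed



lemma fermat_int:
  assumes "prime p" "\<not> int p dvd a"
  shows "[a^(p-1) = 1] (mod int p)"
proof -
  define b where "b = nat (a mod int p)"
  have p0: "int p > 0" using assms prime_gt_0_nat by simp
  have ib: "int b = a mod int p" unfolding b_def using p0 by simp
  have ab: "[a = int b] (mod int p)" unfolding ib cong_def by simp
  have nb: "\<not> p dvd b"
  proof
    assume "p dvd b"
    then have "int p dvd int b" by simp
    then have "int p dvd a mod int p" using ib by simp
    then show False using assms(2) by (simp add: dvd_mod_iff)
  qed
  have "[b^(p-1) = 1] (mod p)" using fermat_theorem[OF assms(1) nb] .
  then have "[int (b^(p-1)) = int 1] (mod int p)" using cong_int_iff by blast
  then have "[int b^(p-1) = 1] (mod int p)" by simp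
  moreover have "[a^(p-1) = int b^(p-1)] (mod int p)" using cong_pow[OF ab] .
  ultimately show ?thesis using cong_trans by blast
qed

lemma qf_pos: "qf 2 5 2 i j = (2*i + j) * (i + 2*j)"
  unfolding qf_def by (simp add: algebra_simps power2_eq_square)

lemma qf_neg: "qf 2 (-5) 2 i j = (2*i - j) * (i - 2*j)"
  unfolding qf_def by (simp add: algebra_simps power2_eq_square)

lemma T_pm:
  assumes pp: "prime p" and p3: "p > 3"
  shows "[T p 2 5 2 * T p 2 (-5) 2 = (-1)^((p-1) div 2)] (mod int p)"
proof -
  define n where "n = int p"
  define h where "h = (p-1) div 2"
  have oddp: "odd p" using pp p3 prime_odd_nat by auto
  have ph: "p = 2*h+1" using oddp h_def by (auto elim: oddE)
  have hp: "h < p" using ph by simp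
  define g where "g = (\<lambda>(i::nat) (j::nat). (2*int i + int j) * (int i + 2*int j))"
  define S1 where "S1 = {(i,j). i \<in> {1..h} \<and> j \<in> {1..h} \<and> \<not> n dvd g i j}"
  define S2 where "S2 = {(i,j). i \<in> {1..h} \<and> j \<in> {1..h} \<and> \<not> n dvd qf 2 (-5) 2 (int i) (int j)}"
  define S2' where "S2' = {(i,j). i \<in> {1..h} \<and> j \<in> {h+1..p-1} \<and> \<not> n dvd g i j}"
  define Full where "Full = {(i,j). i \<in> {1..h} \<and> j \<in> {1..p-1} \<and> \<not> n dvd g i j}"
  have T1: "T p 2 5 2 = (\<Prod>(i,j)\<in>S1. g i j)"
    unfolding T_def S1_def g_def n_def h_def qf_pos by simp
  have T2: "T p 2 (-5) 2 = (\<Prod>(i,j)\<in>S2. qf 2 (-5) 2 (int i) (int j))"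
    unfolding T_def S2_def n_def h_def by simp
  have congq: "[qf 2 (-5) 2 (int i) (int j) = g i (p-j)] (mod n)" if "j \<le> p" for i j
  proof -
    have e: "int (p - j) = n - int j" using that n_def by simp
    have "g i (p-j) = qf 2 (-5) 2 (int i) (int j) + n * (5*int i - 4*int j + 2*n)"
      unfolding g_def qf_neg e by (simp add: algebra_simps)
    then show ?thesis unfolding cong_def by simp
  qed
  have dvdq: "n dvd qf 2 (-5) 2 (int i) (int j) \<longleftrightarrow> n dvd g i (p-j)" if "j \<le> p" for i j
    using cong_dvd_iff[OF congq[OF that]] .
  have c2: "[(\<Prod>(i,j)\<in>S2. qf 2 (-5) 2 (int i) (int j)) = (\<Prod>(i,j)\<in>S2. g i (p-j))] (mod n)"
    by (rule cong_prod) (use hp in \<open>auto simp: S2_def intro!: congq\<close>)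
  have r2: "(\<Prod>(i,j)\<in>S2. g i (p-j)) = (\<Prod>(i,j)\<in>S2'. g i j)"
  proof (rule prod.reindex_bij_witness[where i="\<lambda>(i,j). (i, p-j)" and j="\<lambda>(i,j). (i, p-j)"])
    fix b assume "b \<in> S2"
    then obtain i j where a: "b = (i,j)" "i \<in> {1..h}" "j \<in> {1..h}" "\<not> n dvd qf 2 (-5) 2 (int i) (int j)"
      unfolding S2_def by auto
    then have "\<not> n dvd g i (p-j)" using dvdq[of j i] hp by simp
    then show "(case b of (i, j) \<Rightarrow> (i, p - j)) \<in> S2'"
      unfolding S2'_def using a hp ph by auto
    show "(case case b of (i, j) \<Rightarrow> (i, p - j) of (i, j) \<Rightarrow> (i, p - j)) = b"
      using a hp by auto
    show "(case case b of (i, j) \<Rightarrow> (i, p - j) of (i, j) \<Rightarrow> g i j) = (case b of (i, j) \<Rightarrow> g i (p - j))"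
      using a by auto
  next
    fix a assume "a \<in> S2'"
    then obtain i j where a: "a = (i,j)" "i \<in> {1..h}" "j \<in> {h+1..p-1}" "\<not> n dvd g i j"
      unfolding S2'_def by auto
    have "p - (p - j) = j" using a hp by auto
    then have "\<not> n dvd qf 2 (-5) 2 (int i) (int (p-j))" using dvdq[of "p-j" i] a by simp
    then show "(case a of (i, j) \<Rightarrow> (i, p - j)) \<in> S2"
      unfolding S2_def using a hp ph by auto
    show "(case case a of (i, j) \<Rightarrow> (i, p - j) of (i, j) \<Rightarrow> (i, p - j)) = a"
      using a hp by auto
  qed
  have finS: "finite S1" "finite S2'"
  proof -
    have "S1 \<subseteq> {1..h} \<times> {1..h}" unfolding S1_def by auto
    then show "finite S1" by (rule finite_subset) auto
    have "S2' \<subseteq> {1..h} \<times> {h+1..p-1}" unfolding S2'_def by auto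
    then show "finite S2'" by (rule finite_subset) auto
  qed
  have un: "Full = S1 \<union> S2'" and dis: "S1 \<inter> S2' = {}"
    unfolding Full_def S1_def S2'_def using ph by auto
  have eFull: "(\<Prod>(i,j)\<in>Full. g i j) = (\<Prod>(i,j)\<in>S1. g i j) * (\<Prod>(i,j)\<in>S2'. g i j)"
    unfolding un by (rule prod.union_disjoint[OF finS dis])
  have FullS: "Full = Sigma {1..h} (\<lambda>i. {j\<in>{1..p-1}. \<not> n dvd g i j})"
    unfolding Full_def by auto
  define R where "R = (\<lambda>i. \<Prod>j\<in>{j\<in>{1..p-1}. \<not> n dvd g i j}. g i j)"
  have eSig: "(\<Prod>(i,j)\<in>Full. g i j) = (\<Prod>i\<in>{1..h}. R i)"
    unfolding FullS R_def by (subst prod.Sigma[symmetric]) auto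
  have rowc: "[9 * (int i)^4 * R i = -1] (mod n)" if "i \<in> {1..h}" for i
  proof -
    have "\<not> int p dvd int i"
    proof
      assume "int p dvd int i"
      then have "p dvd i" by simp
      then show False using that ph by (auto dest: dvd_imp_le)
    qed
    from row_lemma[OF pp p3 this] show ?thesis unfolding R_def g_def n_def .
  qed
  have "[(\<Prod>i\<in>{1..h}. 9 * (int i)^4 * R i) = (\<Prod>i\<in>{1..h}. -1)] (mod n)"
    by (rule cong_prod) (use rowc in auto)
  moreover have "(\<Prod>i\<in>{1..h}. 9 * (int i)^4 * R i) = (9^h * (fact h)^4) * (\<Prod>i\<in>{1..h}. R i)"
  proof -
    have "(\<Prod>i\<in>{1..h}. int i ^ 4) = fact h ^ 4"
      using prod_power_distrib[of int "{1..h}" 4] prod_int_fact[of h] by simp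
    then show ?thesis by (simp add: prod.distrib)
  qed
  ultimately have A: "[(9^h * (fact h)^4) * (\<Prod>i\<in>{1..h}. R i) = (-1)^h] (mod n)" by simp
  have B: "[9^h * (fact h)^4 = (1::int)] (mod n)"
  proof -
    have "[3^(p-1) = (1::int)] (mod n)" using fermat_int[OF pp] p_not_dvd_small[OF pp p3] n_def by simp
    moreover have "(3::int)^(p-1) = 9^h" using ph by (simp add: power_mult)
    ultimately have a: "[9^h = (1::int)] (mod n)" by simp
    have f: "[fact h ^2 = (-1::int)^(h+1)] (mod n)" using fact_half_sq[OF pp oddp] unfolding h_def n_def .
    have "[(fact h^2)^2 = ((-1::int)^(h+1))^2] (mod n)" by (rule cong_pow[OF f])
    moreover have "(fact h^2)^2 = (fact h::int)^4" by (simp flip: power_mult)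
    moreover have "((-1::int)^(h+1))^2 = 1" by (simp add: power2_eq_square power_mult_distrib[symmetric])
    ultimately have b: "[fact h^4 = (1::int)] (mod n)" by simp
    show ?thesis using cong_mult[OF a b] by simp
  qed
  have X: "[(\<Prod>i\<in>{1..h}. R i) = (-1)^h] (mod n)"
    using cong_trans[OF cong_sym[OF cong_mult[OF B cong_refl]] A] by simp
  have Y: "[T p 2 5 2 * T p 2 (-5) 2 = (\<Prod>(i,j)\<in>S1. g i j) * (\<Prod>(i,j)\<in>S2'. g i j)] (mod n)"
    unfolding T1 T2 r2[symmetric] by (rule cong_mult[OF cong_refl c2])
  have "[T p 2 5 2 * T p 2 (-5) 2 = (-1)^h] (mod n)"
    using cong_trans[OF Y[unfolded eFull[symmetric] eSig] X] .
  then show ?thesis unfolding h_def n_def .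
qed


definition rowP :: "nat \<Rightarrow> nat \<Rightarrow> int" where
  "rowP p i = (\<Prod>j\<in>{j\<in>{1..(p-1) div 2}. 2*i+j \<noteq> p \<and> i+2*j \<noteq> p}. int (2*i+j))"

lemma dvd_small: "0 < x \<Longrightarrow> x < 2*p \<Longrightarrow> (int p dvd int x \<longleftrightarrow> x = p)"
proof
  assume a: "0 < x" "x < 2*p" "int p dvd int x"
  then obtain k where k: "x = p * k" by (auto simp: int_dvd_int_iff elim!: dvdE)
  then have "k \<noteq> 0" using a by auto
  moreover have "k < 2" using a k by (cases "k \<ge> 2") (auto dest: mult_le_mono2[of 2 k p])
  ultimately have "k = 1" by auto
  then show "x = p" using k by simp
qed auto

lemma T1_sq:
  assumes pp: "prime p" and p3: "p > 3"
  shows "T p 2 5 2 = (\<Prod>i\<in>{1..(p-1) div 2}. rowP p i)^2"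
proof -
  define h where "h = (p-1) div 2"
  have oddp: "odd p" using pp p3 prime_odd_nat by auto
  have ph: "p = 2*h+1" using oddp h_def by (auto elim: oddE)
  have pr: "prime (int p)" using pp by simp
  define S where "S = {(i,j). i \<in> {1..h} \<and> j \<in> {1..h} \<and> 2*i+j \<noteq> p \<and> i+2*j \<noteq> p}"
  have cond: "(\<not> int p dvd qf 2 5 2 (int i) (int j)) \<longleftrightarrow> (2*i+j \<noteq> p \<and> i+2*j \<noteq> p)"
    if "i \<in> {1..h}" "j \<in> {1..h}" for i j
  proof -
    have "qf 2 5 2 (int i) (int j) = int (2*i+j) * int (i+2*j)" unfolding qf_pos by simp
    then have "int p dvd qf 2 5 2 (int i) (int j) \<longleftrightarrow> int p dvd int (2*i+j) \<or> int p dvd int (i+2*j)"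
      using prime_dvd_mult_iff[OF pr] by simp
    also have "\<dots> \<longleftrightarrow> 2*i+j = p \<or> i+2*j = p"
      using dvd_small[of "2*i+j" p] dvd_small[of "i+2*j" p] that ph by auto
    finally show ?thesis by blast
  qed
  have eT: "T p 2 5 2 = (\<Prod>(i,j)\<in>S. int (2*i+j) * int (i+2*j))"
    unfolding T_def h_def[symmetric]
  proof (rule prod.cong)
    show "{(i, j). i \<in> {1..h} \<and> j \<in> {1..h} \<and> \<not> int p dvd qf 2 5 2 (int i) (int j)} = S"
      unfolding S_def using cond by auto
  qed (auto simp: qf_pos)
  have sw: "(\<Prod>(i,j)\<in>S. int (i+2*j)) = (\<Prod>(i,j)\<in>S. int (2*i+j))"
    by (rule prod.reindex_bij_witness[where i="\<lambda>(i,j). (j,i)" and j="\<lambda>(i,j). (j,i)"])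
       (auto simp: S_def)
  have eP: "(\<Prod>(i,j)\<in>S. int (2*i+j)) = (\<Prod>i\<in>{1..h}. rowP p i)"
  proof -
    have "S = Sigma {1..h} (\<lambda>i. {j\<in>{1..h}. 2*i+j \<noteq> p \<and> i+2*j \<noteq> p})" unfolding S_def by auto
    then show ?thesis unfolding rowP_def h_def[symmetric] by (simp add: prod.Sigma[symmetric])
  qed
  have "T p 2 5 2 = (\<Prod>(i,j)\<in>S. int (2*i+j)) * (\<Prod>(i,j)\<in>S. int (i+2*j))"
    unfolding eT by (simp add: prod.distrib split_def)
  then show ?thesis unfolding sw eP h_def by (simp add: power2_eq_square)
qed



definition fullP :: "nat \<Rightarrow> nat \<Rightarrow> int" where
  "fullP p i = (\<Prod>j\<in>{j\<in>{1..(p-1) div 2}. 2*i+j \<noteq> p}. int (2*i+j))"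

definition extP :: "nat \<Rightarrow> nat \<Rightarrow> int" where
  "extP p i = (if odd i then int (2*i + (p-i) div 2) else 1)"

definition fp :: "nat \<Rightarrow> nat \<Rightarrow> int" where
  "fp p m = (\<Prod>k\<in>{k\<in>{1..m}. k \<noteq> p}. int k)"

lemma prod_filter_Suc:
  "(\<Prod>j\<in>{j\<in>{1..Suc b}. P j}. f j) = (\<Prod>j\<in>{j\<in>{1..b}. P j}. f j) * (if P (Suc b) then f (Suc b) else (1::'a::comm_monoid_mult))"
proof -
  have "{j\<in>{1..Suc b}. P j} = (if P (Suc b) then insert (Suc b) {j\<in>{1..b}. P j} else {j\<in>{1..b}. P j})"
    by (auto simp: atLeastAtMostSuc_conv)
  then show ?thesis by (auto simp: mult.commute)
qed

lemma fp_Suc: "fp p (Suc m) = fp p m * (if Suc m \<noteq> p then int (Suc m) else 1)"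
  unfolding fp_def by (rule prod_filter_Suc)

lemma fp_small: "m < p \<Longrightarrow> fp p m = fact m"
proof (induction m)
  case 0 show ?case by (simp add: fp_def)
next
  case (Suc m) then show ?case by (simp add: fp_Suc algebra_simps)
qed

lemma fp_shift: "fp p (a + b) = fp p a * (\<Prod>j\<in>{j\<in>{1..b}. a+j \<noteq> p}. int (a+j))"
proof (induction b)
  case 0 then show ?case by simp
next
  case (Suc b)
  have "fp p (a + Suc b) = fp p (Suc (a+b))" by simp
  also have "\<dots> = fp p (a+b) * (if Suc (a+b) \<noteq> p then int (Suc (a+b)) else 1)" by (rule fp_Suc)
  also have "\<dots> = fp p a * ((\<Prod>j\<in>{j\<in>{1..b}. a+j \<noteq> p}. int (a+j)) * (if a + Suc b \<noteq> p then int (a + Suc b) else 1))"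
    using Suc by simp
  also have "\<dots> = fp p a * (\<Prod>j\<in>{j\<in>{1..Suc b}. a+j \<noteq> p}. int (a+j))"
    using prod_filter_Suc[where P="\<lambda>j. a+j \<noteq> p" and f="\<lambda>j. int (a+j)" and b=b] by simp
  finally show ?case .
qed

lemma fp_big:
  assumes pp: "prime p" and pm: "p \<le> m"
  shows "[fp p m = - fact (m-p)] (mod int p)"
proof -
  have p1: "p \<ge> 1" using pp prime_ge_1_nat by blast
  have "fp p p = fp p (Suc (p-1))" using p1 by simp
  also have "\<dots> = fp p (p-1)" unfolding fp_Suc using p1 by simp
  also have "\<dots> = fact (p-1)" using p1 by (intro fp_small) auto
  finally have fpp: "fp p p = fact (p-1)" .
  have "fp p m = fp p (p + (m-p))" using pm by simp
  also have "\<dots> = fp p p * (\<Prod>j\<in>{j\<in>{1..m-p}. p+j \<noteq> p}. int (p+j))" by (rule fp_shift)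
  also have "{j\<in>{1..m-p}. p+j \<noteq> p} = {1..m-p}" by auto
  finally have e: "fp p m = fact (p-1) * (\<Prod>j\<in>{1..m-p}. int (p+j))" unfolding fpp .
  have c: "[(\<Prod>j\<in>{1..m-p}. int (p+j)) = (\<Prod>j\<in>{1..m-p}. int j)] (mod int p)"
    by (rule cong_prod) (simp add: cong_def)
  have "[fact (p-1) * (\<Prod>j\<in>{1..m-p}. int (p+j)) = (-1) * (\<Prod>j\<in>{1..m-p}. int j)] (mod int p)"
    by (rule cong_mult[OF wilson_theorem[OF pp] c])
  then show ?thesis unfolding e prod_int_fact by simp
qed

lemma fp_full:
  assumes "2*i < p"
  shows "fp p (2*i + (p-1) div 2) = fact (2*i) * fullP p i"
  unfolding fullP_def fp_shift fp_small[OF assms] ..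

lemma full_row:
  assumes pp: "prime p" and p3: "p > 3" and i: "i \<in> {1..(p-1) div 2}"
  shows "fullP p i = rowP p i * extP p i"
proof -
  define h where "h = (p-1) div 2"
  have oddp: "odd p" using pp p3 prime_odd_nat by auto
  have ph: "p = 2*h+1" using oddp h_def by (auto elim: oddE)
  have i': "1 \<le> i" "i \<le> h" using i h_def by auto
  define A where "A = {j\<in>{1..h}. 2*i+j \<noteq> p}"
  define B where "B = {j\<in>{1..h}. 2*i+j \<noteq> p \<and> i+2*j \<noteq> p}"
  show ?thesis
  proof (cases "odd i")
    case True
    define j0 where "j0 = (p-i) div 2"
    have e0: "i + 2*j0 = p" using True oddp i' ph unfolding j0_def
      by (auto elim!: oddE)
    have j0h: "j0 \<in> {1..h}" using e0 i' ph by auto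
    have "2*i+j0 \<noteq> p"
    proof
      assume "2*i+j0 = p"
      then have "p = 3*i" using e0 by linarith
      then have "3 dvd p" by simp
      then show False using pp p3 by (metis prime_nat_iff nat_neq_iff numeral_eq_one_iff semiring_norm(86) not_less_iff_gr_or_eq)
    qed
    then have AB: "A = insert j0 B" "j0 \<notin> B" using e0 j0h unfolding A_def B_def by auto
    have "fullP p i = prod (\<lambda>j. int (2*i+j)) A" unfolding fullP_def A_def h_def ..
    also have "\<dots> = int (2*i+j0) * prod (\<lambda>j. int (2*i+j)) B" using AB unfolding B_def by simp
    also have "prod (\<lambda>j. int (2*i+j)) B = rowP p i" unfolding rowP_def B_def h_def ..
    finally show ?thesis unfolding extP_def j0_def using True by simp
  next
    case False
    have "A = B" unfolding A_def B_def using False oddp by auto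
    then show ?thesis unfolding fullP_def rowP_def extP_def A_def B_def h_def using False by simp
  qed
qed



definition Gf :: "nat \<Rightarrow> nat \<Rightarrow> int" where
  "Gf p m = (if m < p then fact m else - fact (m-p))"

lemma prod_split: "(\<Prod>i\<in>{1..a+(b::nat)}. f i) = (\<Prod>i\<in>{1..a}. f i) * (\<Prod>i\<in>{1..b}. f (a+i))"
  by (induction b) (auto simp: atLeastAtMostSuc_conv algebra_simps)

lemma fact_coprime:
  assumes "prime p" "k < p"
  shows "coprime (fact k :: int) (int p)"
proof -
  have "\<not> p dvd fact k" using prime_dvd_fact_iff[OF assms(1)] assms(2) by simp
  then have "\<not> int p dvd fact k" by (metis of_nat_fact int_dvd_int_iff)
  moreover have "prime (int p)" using assms by simp
  ultimately show ?thesis using prime_imp_coprime by (metis coprime_commute)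
qed

lemma full_G:
  assumes pp: "prime p" and p3: "p > 3"
  shows "[(\<Prod>i\<in>{1..(p-1) div 2}. fullP p i) * (\<Prod>i\<in>{1..(p-1) div 2}. fact (2*i))
          = (\<Prod>i\<in>{1..(p-1) div 2}. Gf p ((p-1) div 2 + 2*i))] (mod int p)"
proof -
  define h where "h = (p-1) div 2"
  have oddp: "odd p" using pp p3 prime_odd_nat by auto
  have ph: "p = 2*h+1" using oddp h_def by (auto elim: oddE)
  have "(\<Prod>i\<in>{1..h}. fullP p i) * (\<Prod>i\<in>{1..h}. fact (2*i)) = (\<Prod>i\<in>{1..h}. fp p (2*i + h))"
    unfolding prod.distrib[symmetric]
  proof (rule prod.cong[OF refl])
    fix i assume "i \<in> {1..h}"
    then have "2*i < p" using ph by auto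
    then show "fullP p i * fact (2*i) = fp p (2*i+h)" using fp_full[of i p] unfolding h_def by simp
  qed
  moreover have "[(\<Prod>i\<in>{1..h}. fp p (2*i + h)) = (\<Prod>i\<in>{1..h}. Gf p (h + 2*i))] (mod int p)"
  proof (rule cong_prod)
    fix i assume "i \<in> {1..h}"
    show "[fp p (2*i + h) = Gf p (h + 2*i)] (mod int p)"
    proof (cases "h + 2*i < p")
      case True then show ?thesis by (simp add: Gf_def fp_small add.commute)
    next
      case False then show ?thesis using fp_big[OF pp, of "2*i+h"] by (simp add: Gf_def add.commute)
    qed
  qed
  ultimately show ?thesis unfolding h_def by simp
qed



lemma prod_2i: "(\<Prod>i\<in>{1..m}. int (2*i)) = 2^m * fact m"
proof -
  have "(\<Prod>i\<in>{1..m}. int (2*i)) = (\<Prod>i\<in>{1..m}. 2 * int i)" by simp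
  also have "\<dots> = 2^m * (\<Prod>i\<in>{1..m}. int i)" by (simp add: prod.distrib)
  finally show ?thesis using prod_int_fact by simp
qed

lemma prod_split2: "(\<Prod>i\<in>{1..2*(m::nat)}. f i) = (\<Prod>i\<in>{1..m}. f i) * (\<Prod>i\<in>{1..m}. f (m+i))"
  using prod_split[of f m m] by (simp add: mult_2)

lemma prod_split3: "(\<Prod>i\<in>{1..2*(m::nat)+1}. f i) = (\<Prod>i\<in>{1..m}. f i) * (\<Prod>i\<in>{1..m+1}. f (m+i))"
  using prod_split[of f m "m+1"] by (simp add: mult_2)

lemma coprime_prod_fact:
  assumes "prime p" "\<And>i. i \<in> A \<Longrightarrow> g i < p"
  shows "coprime (\<Prod>i\<in>A. (fact (g i) :: int)) (int p)"
  by (rule prod_coprime_left) (use assms fact_coprime in auto)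

lemma tele_even:
  assumes pp: "prime p" and pm: "p = 4*m+1" and p3: "p > 3"
  shows "[(\<Prod>i\<in>{1..2*m}. fullP p i) * (2^m * fact m) = (-1)^m] (mod int p)"
proof -
  have hh: "(p-1) div 2 = 2*m" using pm by simp
  have FG: "[(\<Prod>i\<in>{1..2*m}. fullP p i) * (\<Prod>i\<in>{1..2*m}. fact (2*i))
          = (\<Prod>i\<in>{1..2*m}. Gf p (2*m + 2*i))] (mod int p)"
    using full_G[OF pp p3] unfolding hh .
  define X where "X = (\<Prod>i\<in>{1..m}. fact (2*m+2*i) :: int)"
  define Y where "Y = (\<Prod>i\<in>{1..m}. fact (2*i-1) :: int)"
  have e1: "(\<Prod>i\<in>{1..2*m}. Gf p (2*m + 2*i)) = X * ((-1)^m * Y)"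
  proof -
    have a: "(\<Prod>i\<in>{1..m}. Gf p (2*m + 2*i)) = X"
      unfolding X_def by (rule prod.cong) (auto simp: Gf_def pm)
    have "(\<Prod>i\<in>{1..m}. Gf p (2*m + 2*(m+i))) = (\<Prod>i\<in>{1..m}. - fact (2*i-1))"
      by (rule prod.cong) (auto simp: Gf_def pm)
    also have "\<dots> = (-1)^m * Y" unfolding Y_def by (subst neg_prod) simp
    finally have b: "(\<Prod>i\<in>{1..m}. Gf p (2*m + 2*(m+i))) = (-1)^m * Y" .
    show ?thesis unfolding prod_split2[of "\<lambda>i. Gf p (2*m + 2*i)"] a b ..
  qed
  have e2: "(\<Prod>i\<in>{1..2*m}. fact (2*i) :: int) = (Y * (2^m * fact m)) * X"
  proof -
    have a: "(\<Prod>i\<in>{1..m}. fact (2*(m+i)) :: int) = X"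
      unfolding X_def by (rule prod.cong) (auto simp: algebra_simps)
    have "(\<Prod>i\<in>{1..m}. fact (2*i) :: int) = (\<Prod>i\<in>{1..m}. int (2*i) * fact (2*i-1))"
      by (rule prod.cong) (auto simp: fact_reduce)
    also have "\<dots> = (2^m * fact m) * Y" unfolding Y_def prod.distrib prod_2i ..
    finally have b: "(\<Prod>i\<in>{1..m}. fact (2*i) :: int) = (2^m * fact m) * Y" .
    show ?thesis unfolding prod_split2[of "\<lambda>i. fact (2*i)"] a b by (simp add: algebra_simps)
  qed
  have cop: "coprime (X * Y) (int p)"
    unfolding X_def Y_def coprime_mult_left_iff
    by (intro conjI coprime_prod_fact[OF pp]) (auto simp: pm)
  have "[(X * Y) * ((\<Prod>i\<in>{1..2*m}. fullP p i) * (2^m * fact m)) = (X * Y) * (-1)^m] (mod int p)"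
  proof -
    have L: "(X * Y) * ((\<Prod>i\<in>{1..2*m}. fullP p i) * (2^m * fact m))
        = (\<Prod>i\<in>{1..2*m}. fullP p i) * (\<Prod>i\<in>{1..2*m}. fact (2*i))"
      unfolding e2 by (simp add: algebra_simps)
    have R: "(X * Y) * (-1)^m = (\<Prod>i\<in>{1..2*m}. Gf p (2*m + 2*i))"
      unfolding e1 by (simp add: algebra_simps)
    show ?thesis using FG by (simp only: L R)
  qed
  then show ?thesis using cong_mult_lcancel[OF cop] by blast
qed

lemma tele_odd:
  assumes pp: "prime p" and pm: "p = 4*m+3" and p3: "p > 3"
  shows "[(\<Prod>i\<in>{1..2*m+1}. fullP p i) = (-1)^m * (\<Prod>i\<in>{1..m}. int (2*m+1+2*i))] (mod int p)"
proof -
  have hh: "(p-1) div 2 = 2*m+1" using pm by simp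
  have FG: "[(\<Prod>i\<in>{1..2*m+1}. fullP p i) * (\<Prod>i\<in>{1..2*m+1}. fact (2*i))
          = (\<Prod>i\<in>{1..2*m+1}. Gf p (2*m+1 + 2*i))] (mod int p)"
    using full_G[OF pp p3] unfolding hh .
  define A where "A = (\<Prod>i\<in>{1..m}. fact (2*m+2*i) :: int)"
  define C where "C = (\<Prod>i\<in>{1..m}. fact (2*i) :: int)"
  define Q where "Q = (\<Prod>i\<in>{1..m}. int (2*m+1+2*i))"
  have e1: "(\<Prod>i\<in>{1..2*m+1}. Gf p (2*m+1 + 2*i)) = (Q * A) * ((-1)^(m+1) * C)"
  proof -
    have "(\<Prod>i\<in>{1..m}. Gf p (2*m+1 + 2*i)) = (\<Prod>i\<in>{1..m}. int (2*m+1+2*i) * fact (2*m+2*i))"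
      by (rule prod.cong) (auto simp: Gf_def pm)
    also have "\<dots> = Q * A" unfolding Q_def A_def by (simp add: prod.distrib)
    finally have a: "(\<Prod>i\<in>{1..m}. Gf p (2*m+1 + 2*i)) = Q * A" .
    have "(\<Prod>i\<in>{1..m+1}. Gf p (2*m+1 + 2*(m+i))) = (\<Prod>i\<in>{1..m+1}. - fact (2*i-2))"
      by (rule prod.cong) (auto simp: Gf_def pm)
    also have "\<dots> = (-1)^(m+1) * (\<Prod>i\<in>{1..1+m}. fact (2*i-2))" by (subst neg_prod) simp
    also have "(\<Prod>i\<in>{1..1+m}. fact (2*i-2) :: int) = C"
      unfolding prod_split C_def by simp
    finally have b: "(\<Prod>i\<in>{1..m+1}. Gf p (2*m+1 + 2*(m+i))) = (-1)^(m+1) * C" .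
    show ?thesis unfolding prod_split3[of "\<lambda>i. Gf p (2*m+1 + 2*i)"] a b ..
  qed
  have e2: "(\<Prod>i\<in>{1..2*m+1}. fact (2*i) :: int) = C * (A * fact (p-1))"
  proof -
    have "(\<Prod>i\<in>{1..m+1}. fact (2*(m+i)) :: int) = (\<Prod>i\<in>{1..m}. fact (2*(m+i))) * (\<Prod>i\<in>{1..1}. fact (2*(m+(m+i))))"
      by (rule prod_split)
    also have "(\<Prod>i\<in>{1..m}. fact (2*(m+i)) :: int) = A"
      unfolding A_def by (rule prod.cong) (auto simp: algebra_simps)
    also have "(\<Prod>i\<in>{1..1}. fact (2*(m+(m+i))) :: int) = fact (p-1)" using pm by simp
    finally have a: "(\<Prod>i\<in>{1..m+1}. fact (2*(m+i)) :: int) = A * fact (p-1)" .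
    show ?thesis unfolding prod_split3[of "\<lambda>i. fact (2*i)"] a C_def ..
  qed
  have cop: "coprime (C * A) (int p)"
    unfolding A_def C_def coprime_mult_left_iff
    by (intro conjI coprime_prod_fact[OF pp]) (auto simp: pm)
  have w: "[fact (p-1) = (-1::int)] (mod int p)" using wilson_theorem[OF pp] .
  have "[(\<Prod>i\<in>{1..2*m+1}. fullP p i) * (C * (A * fact (p-1))) = (Q * A) * ((-1)^(m+1) * C)] (mod int p)"
    using FG unfolding e1 e2 .
  moreover have "[(\<Prod>i\<in>{1..2*m+1}. fullP p i) * (C * (A * fact (p-1))) = (\<Prod>i\<in>{1..2*m+1}. fullP p i) * (C * (A * (-1)))] (mod int p)"
    by (intro cong_mult cong_refl w)
  ultimately have "[(\<Prod>i\<in>{1..2*m+1}. fullP p i) * (C * (A * (-1))) = (Q * A) * ((-1)^(m+1) * C)] (mod int p)"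
    using cong_trans cong_sym by blast
  then have "[(C * A) * (- (\<Prod>i\<in>{1..2*m+1}. fullP p i)) = (C * A) * ((-1)^(m+1) * Q)] (mod int p)"
    by (simp add: algebra_simps)
  then have "[- (\<Prod>i\<in>{1..2*m+1}. fullP p i) = (-1)^(m+1) * Q] (mod int p)"
    using cong_mult_lcancel[OF cop] by blast
  then have "[- (- (\<Prod>i\<in>{1..2*m+1}. fullP p i)) = - ((-1)^(m+1) * Q)] (mod int p)"
    by (rule cong_minus_minus_iff[THEN iffD2])
  then show ?thesis unfolding Q_def by simp
qed



lemma prod_odd_even: "(\<Prod>i\<in>{1..2*(K::nat)}. (if odd i then f i else (1::'a::comm_monoid_mult))) = (\<Prod>k\<in>{1..K}. f (2*k-1))"
proof (induction K)
  case 0 then show ?case by simp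
next
  case (Suc K)
  have e: "2 * Suc K = Suc (Suc (2*K))" by simp
  show ?case unfolding e using Suc by (simp add: atLeastAtMostSuc_conv mult.commute)
qed

lemma prod_odd_odd: "(\<Prod>i\<in>{1..2*(K::nat)+1}. (if odd i then f i else (1::'a::comm_monoid_mult))) = (\<Prod>k\<in>{1..K+1}. f (2*k-1))"
proof -
  have "(\<Prod>i\<in>{1..2*(K::nat)+1}. (if odd i then f i else (1::'a))) = (\<Prod>i\<in>{1..2*K}. (if odd i then f i else 1)) * f (2*K+1)"
    by (simp add: atLeastAtMostSuc_conv mult.commute)
  also have "\<dots> = (\<Prod>k\<in>{1..K}. f (2*k-1)) * f (2*(K+1)-1)" using prod_odd_even[where K=K and f=f] by simp
  also have "\<dots> = (\<Prod>k\<in>{1..K+1}. f (2*k-1))" by (simp add: atLeastAtMostSuc_conv mult.commute)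
  finally show ?thesis .
qed


lemma ext_cong:
  assumes "odd p" "odd i" "i \<le> p"
  shows "[2 * int (2*i + (p-i) div 2) = 3 * int i] (mod int p)"
proof -
  have "even (p - i)" using assms by auto
  then have "2 * (2*i + (p-i) div 2) = 3*i + p" using assms by auto
  then have eq: "2 * int (2*i + (p-i) div 2) = 3 * int i + int p" by linarith
  show ?thesis unfolding eq by (simp add: cong_def)
qed

lemma prod_const_mult: "(\<Prod>k\<in>A. c * f k) = c^card A * prod f A"
  by (induction A rule: infinite_finite_induct) (auto simp: algebra_simps)

lemma ext_prod:
  assumes "odd p" "2*K \<le> p"
  shows "[2^K * (\<Prod>k\<in>{1..K}. int (2*(2*k-1) + (p-(2*k-1)) div 2)) = 3^K * (\<Prod>k\<in>{1..K}. int (2*k-1))] (mod int p)"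
proof -
  have "2^K * (\<Prod>k\<in>{1..K}. int (2*(2*k-1) + (p-(2*k-1)) div 2)) = (\<Prod>k\<in>{1..K}. 2 * int (2*(2*k-1) + (p-(2*k-1)) div 2))"
    using prod_const_mult[of 2 "\<lambda>k. int (2*(2*k-1) + (p-(2*k-1)) div 2)" "{1..K}"] by simp
  moreover have "[(\<Prod>k\<in>{1..K}. 2 * int (2*(2*k-1) + (p-(2*k-1)) div 2)) = (\<Prod>k\<in>{1..K}. 3 * int (2*k-1))] (mod int p)"
  proof (rule cong_prod)
    fix k assume "k \<in> {1..K}"
    then have "odd (2*k-1)" "2*k-1 \<le> p" using assms by auto
    then show "[2 * int (2*(2*k-1) + (p-(2*k-1)) div 2) = 3 * int (2*k-1)] (mod int p)"
      by (rule ext_cong[OF assms(1)])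
  qed
  moreover have "(\<Prod>k\<in>{1..K}. 3 * int (2*k-1)) = 3^K * (\<Prod>k\<in>{1..K}. int (2*k-1))"
    using prod_const_mult[of 3 "\<lambda>k. int (2*k-1)" "{1..K}"] by simp
  ultimately show ?thesis by simp
qed


lemma pow2_even:
  assumes pp: "prime p" and pm: "p = 4*m+1"
  shows "[2^(2*m) = (-1::int)^m] (mod int p)"
proof -
  define Odd where "Odd = (\<Prod>k\<in>{1..m}. int (2*k-1))"
  have a: "(\<Prod>k\<in>{1..2*m}. int (2*k)) = 2^(2*m) * fact (2*m)" by (rule prod_2i)
  have b: "(\<Prod>k\<in>{1..2*m}. int (2*k)) = (\<Prod>k\<in>{1..m}. int (2*k)) * (\<Prod>k\<in>{1..m}. int (2*(m+k)))"
    by (rule prod_split2)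
  have c: "(\<Prod>k\<in>{1..m}. int (2*(m+k))) = (\<Prod>k\<in>{1..m}. int (2*(m+(m+1-k))))"
    using prod.atLeastAtMost_rev[of "\<lambda>k. int (2*(m+k))" 1 m] by simp
  have d: "[(\<Prod>k\<in>{1..m}. int (2*(m+(m+1-k)))) = (\<Prod>k\<in>{1..m}. - int (2*k-1))] (mod int p)"
  proof (rule cong_prod)
    fix k assume "k \<in> {1..m}"
    then have "int (2*(m+(m+1-k))) = int p + (- int (2*k-1))" using pm by auto
    then show "[int (2*(m+(m+1-k))) = - int (2*k-1)] (mod int p)" by (simp add: cong_def)
  qed
  have e: "(\<Prod>k\<in>{1..m}. - int (2*k-1)) = (-1)^m * Odd" unfolding Odd_def by (subst neg_prod) simp
  have X: "[2^(2*m) * fact (2*m) = (2^m * fact m) * ((-1)^m * Odd)] (mod int p)"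
  proof -
    have d2: "[(\<Prod>k\<in>{1..m}. int (2*(m+k))) = (-1)^m * Odd] (mod int p)"
      using d unfolding c[symmetric] e .
    have "[(\<Prod>k\<in>{1..m}. int (2*k)) * (\<Prod>k\<in>{1..m}. int (2*(m+k))) = (\<Prod>k\<in>{1..m}. int (2*k)) * ((-1)^m * Odd)] (mod int p)"
      by (rule cong_mult[OF cong_refl d2])
    then have "[(\<Prod>k\<in>{1..2*m}. int (2*k)) = (\<Prod>k\<in>{1..m}. int (2*k)) * ((-1)^m * Odd)] (mod int p)"
      by (simp only: b)
    then show ?thesis by (simp only: prod_2i)
  qed
  have Y: "(2^m * fact m) * ((-1)^m * Odd) = fact (2*m) * (-1::int)^m"
  proof -
    have "(2^m * fact m) * ((-1)^m * Odd) = (Odd * 2^m * fact m) * (-1::int)^m" by (simp only: ac_simps)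
    then show ?thesis unfolding Odd_def odd_prod .
  qed
  have Z: "[fact (2*m) * 2^(2*m) = fact (2*m) * (-1::int)^m] (mod int p)"
    using X unfolding Y by (simp only: ac_simps)
  have cop: "coprime (fact (2*m) :: int) (int p)" using fact_coprime[OF pp] pm by simp
  show ?thesis using iffD1[OF cong_mult_lcancel[OF cop] Z] .
qed



lemma cong_subst: "[a = b] (mod n) \<Longrightarrow> a' = a \<Longrightarrow> b' = b \<Longrightarrow> [a' = b'] (mod n)"
  by simp

lemma T1_mod1:
  assumes pp: "prime p" and p3: "p > 3" and pm: "p = 4*m+1"
  shows "[T p 2 5 2 = - (6^(2*m))] (mod int p)"
proof -
  have hh: "(p-1) div 2 = 2*m" using pm by simp
  have oddp: "odd p" using pm by simp
  define P where "P = (\<Prod>i\<in>{1..2*m}. rowP p i)"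
  define E where "E = (\<Prod>k\<in>{1..m}. int (2*(2*k-1) + (p-(2*k-1)) div 2))"
  define Odd where "Odd = (\<Prod>k\<in>{1..m}. int (2*k-1))"
  have TP: "T p 2 5 2 = P^2" using T1_sq[OF pp p3] unfolding hh P_def .
  have FE: "(\<Prod>i\<in>{1..2*m}. fullP p i) = P * E"
  proof -
    have "(\<Prod>i\<in>{1..2*m}. fullP p i) = (\<Prod>i\<in>{1..2*m}. rowP p i * extP p i)"
      by (rule prod.cong[OF refl]) (use full_row[OF pp p3] hh in auto)
    also have "\<dots> = P * (\<Prod>i\<in>{1..2*m}. extP p i)" unfolding P_def by (rule prod.distrib)
    also have "(\<Prod>i\<in>{1..2*m}. extP p i) = E" unfolding extP_def E_def by (rule prod_odd_even)
    finally show ?thesis .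
  qed
  have t: "[P * E * (2^m * fact m) = (-1)^m] (mod int p)" using tele_even[OF pp pm p3] unfolding FE .
  have x: "[2^m * E = 3^m * Odd] (mod int p)" unfolding E_def Odd_def by (rule ext_prod) (use pm in auto)
  have o: "Odd * 2^m * fact m = fact (2*m)" unfolding Odd_def by (rule odd_prod)
  have s1: "[P * (2^m * E) * (2^m * fact m) = 2^m * (-1)^m] (mod int p)"
    by (rule cong_subst[OF cong_mult[OF cong_refl t, of "2^m"]]) (simp_all add: algebra_simps)
  have s2: "[P * (3^m * Odd) * (2^m * fact m) = 2^m * (-1)^m] (mod int p)"
    using cong_trans[OF cong_sym[OF cong_mult[OF cong_mult[OF cong_refl x] cong_refl]] s1] .
  have e3: "P * 3^m * fact (2*m) = P * (3^m * Odd) * (2^m * fact m)"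
    unfolding o[symmetric] by (simp only: ac_simps)
  have s3: "[P * 3^m * fact (2*m) = 2^m * (-1)^m] (mod int p)"
    using s2 unfolding e3[symmetric] .
  have s4: "[P^2 * 3^(2*m) * fact (2*m)^2 = 2^(2*m)] (mod int p)"
    by (rule cong_subst[OF cong_pow[OF s3, of 2]])
       (simp_all add: power_mult_distrib power_mult[symmetric] mult.commute)
  have f: "[fact (2*m)^2 = (-1::int)] (mod int p)"
    using fact_half_sq[OF pp oddp] unfolding hh by simp
  have s5: "[P^2 * 3^(2*m) * (-1) = 2^(2*m)] (mod int p)"
    using cong_trans[OF cong_sym[OF cong_mult[OF cong_refl f]] s4] .
  have e6a: "(3::int)^(4*m) = 3^(2*m) * 3^(2*m)"
  proof -
    have "(4::nat)*m = 2*m + 2*m" by simp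
    then show ?thesis by (simp only: power_add)
  qed
  have e6b: "(6::int)^(2*m) = 2^(2*m) * 3^(2*m)" by (simp flip: power_mult_distrib)
  have s6: "[P^2 * (-1) * 3^(4*m) = 6^(2*m)] (mod int p)"
    using cong_mult[OF s5 cong_refl, of "3^(2*m)"] unfolding e6a e6b by (simp only: ac_simps)
  have fe: "[3^(4*m) = (1::int)] (mod int p)"
    using fermat_int[OF pp, of 3] p_not_dvd_small[OF pp p3] pm by simp
  have s7: "[P^2 * (-1) * 1 = 6^(2*m)] (mod int p)"
    using cong_trans[OF cong_sym[OF cong_mult[OF cong_refl fe]] s6] .
  then have "[- (P^2) = 6^(2*m)] (mod int p)" by simp
  then have "[- (- (P^2)) = - (6^(2*m))] (mod int p)" by (rule cong_minus_minus_iff[THEN iffD2])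
  then show ?thesis unfolding TP by simp
qed


lemma D_fact: "(\<Prod>k\<in>{1..m+1}. int (2*k-1)) * 2^m * fact m = (fact (2*m+1) :: int)"
proof -
  have a: "(\<Prod>k\<in>{1..m+1}. int (2*k-1)) * 2^(m+1) * fact (m+1) = (fact (2*(m+1)) :: int)"
    by (rule odd_prod)
  have "(2*int m+2) * ((\<Prod>k\<in>{1..m+1}. int (2*k-1)) * 2^m * fact m) = (\<Prod>k\<in>{1..m+1}. int (2*k-1)) * 2^(m+1) * fact (m+1)"
    by (simp add: algebra_simps)
  also have "\<dots> = (2*int m+2) * fact (2*m+1)" unfolding a
  proof -
    have "2*(m+1) = Suc (2*m+1)" by simp
    then show "(fact (2*(m+1)) :: int) = (2*int m+2) * fact (2*m+1)" by (simp only: fact_Suc) simp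
  qed
  finally show ?thesis by simp
qed

lemma B_fact: "int ((2*m) choose m) * fact m * fact m = (fact (2*m) :: int)"
proof -
  have "fact m * fact (2*m - m) * ((2*m) choose m) = (fact (2*m) :: nat)"
    by (rule binomial_fact_lemma) simp
  then have "int (fact m * fact m * ((2*m) choose m)) = int (fact (2*m))" by simp
  then show ?thesis by (simp add: algebra_simps)
qed

lemma D4_B2:
  assumes pp: "prime p" and p3: "p > 3" and pm: "p = 4*m+3"
  shows "[(\<Prod>k\<in>{1..m+1}. int (2*k-1))^4 = int ((2*m) choose m)^2] (mod int p)"
proof -
  define D where "D = (\<Prod>k\<in>{1..m+1}. int (2*k-1))"
  define B where "B = int ((2*m) choose m)"
  have hh: "(p-1) div 2 = 2*m+1" using pm by simp
  have oddp: "odd p" using pm by simp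
  have fm: "(fact m :: int) \<noteq> 0" by simp
  have f4: "(4::int)^m = 2^m * 2^m" by (simp flip: power_mult_distrib)
  have "(D^2 * 4^m) * (fact m * fact m) = (D * 2^m * fact m)^2"
    unfolding f4 by (simp add: power2_eq_square algebra_simps)
  also have "\<dots> = fact (2*m+1) ^ 2" unfolding D_def D_fact ..
  also have "\<dots> = (2*int m+1) * fact (2*m+1) * fact (2*m)"
    by (simp add: power2_eq_square algebra_simps)
  also have "\<dots> = ((2*int m+1) * fact (2*m+1) * B) * (fact m * fact m)"
    unfolding B_def B_fact[symmetric] by (simp add: algebra_simps)
  finally have e: "D^2 * 4^m = (2*int m+1) * fact (2*m+1) * B"
    using fm by simp
  have e2: "D^4 * 4^(2*m+1) = (int p - 1)^2 * (fact (2*m+1))^2 * B^2"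
  proof -
    have "D^4 * 4^(2*m+1) = 4 * (D^2 * 4^m)^2"
      by (simp add: power_mult_distrib power_mult[symmetric] power_add algebra_simps)
    also have "\<dots> = 4 * ((2*int m+1) * fact (2*m+1) * B)^2" unfolding e ..
    also have "\<dots> = (int p - 1)^2 * (fact (2*m+1))^2 * B^2" using pm
      by (simp add: power_mult_distrib power2_eq_square algebra_simps)
    finally show ?thesis .
  qed
  have c1: "[4^(2*m+1) = (1::int)] (mod int p)"
  proof -
    have "[2^(p-1) = (1::int)] (mod int p)" using fermat_int[OF pp, of 2] p_not_dvd_small[OF pp p3] by simp
    moreover have "(2::int)^(p-1) = 4^(2*m+1)" using pm by (simp add: power_mult)
    ultimately show ?thesis by simp
  qed
  have c2: "[(int p - 1)^2 = (1::int)] (mod int p)"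
  proof -
    have "(int p - 1)^2 = 1 + int p * (int p - 2)" by (simp add: power2_eq_square algebra_simps)
    then show ?thesis by (simp add: cong_def)
  qed
  have c3: "[(fact (2*m+1))^2 = (1::int)] (mod int p)"
    using fact_half_sq[OF pp oddp] unfolding hh by simp
  have "[D^4 * 4^(2*m+1) = 1 * 1 * B^2] (mod int p)"
    unfolding e2 by (intro cong_mult c2 c3 cong_refl)
  then have "[D^4 * 1 = B^2] (mod int p)"
    using cong_trans[OF cong_sym[OF cong_mult[OF cong_refl c1]]] by simp
  then show ?thesis unfolding D_def B_def by simp
qed

lemma T1_mod3:
  assumes pp: "prime p" and p3: "p > 3" and pm: "p = 4*m+3"
  shows "[3 * int ((2*m) choose m)^2 * T p 2 5 2 = 2 * 6^(2*m+1)] (mod int p)"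
proof -
  have hh: "(p-1) div 2 = 2*m+1" using pm by simp
  have oddp: "odd p" using pm by simp
  define P where "P = (\<Prod>i\<in>{1..2*m+1}. rowP p i)"
  define E where "E = (\<Prod>k\<in>{1..m+1}. int (2*(2*k-1) + (p-(2*k-1)) div 2))"
  define D where "D = (\<Prod>k\<in>{1..m+1}. int (2*k-1))"
  define Q where "Q = (\<Prod>i\<in>{1..m}. int (2*m+1+2*i))"
  define OH where "OH = (\<Prod>k\<in>{1..2*m+1}. int (2*k-1))"
  define B where "B = int ((2*m) choose m)"
  have TP: "T p 2 5 2 = P^2" using T1_sq[OF pp p3] unfolding hh P_def .
  have FE: "(\<Prod>i\<in>{1..2*m+1}. fullP p i) = P * E"
  proof -
    have "(\<Prod>i\<in>{1..2*m+1}. fullP p i) = (\<Prod>i\<in>{1..2*m+1}. rowP p i * extP p i)"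
      by (rule prod.cong[OF refl]) (use full_row[OF pp p3] hh in auto)
    also have "\<dots> = P * (\<Prod>i\<in>{1..2*m+1}. extP p i)" unfolding P_def by (rule prod.distrib)
    also have "(\<Prod>i\<in>{1..2*m+1}. extP p i) = E" unfolding extP_def E_def by (rule prod_odd_odd)
    finally show ?thesis .
  qed
  have t: "[P * E = (-1)^m * Q] (mod int p)" using tele_odd[OF pp pm p3] unfolding FE Q_def .
  have x: "[2^(m+1) * E = 3^(m+1) * D] (mod int p)" unfolding E_def D_def by (rule ext_prod) (use pm in auto)
  have DQ: "D * Q = OH"
  proof -
    have "OH = (\<Prod>k\<in>{1..(m+1)+m}. int (2*k-1))"
    proof -
      have "2*m+1 = (m+1)+m" by simp
      then show ?thesis unfolding OH_def by (simp only:)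
    qed
    also have "\<dots> = D * (\<Prod>i\<in>{1..m}. int (2*(m+1+i)-1))" unfolding prod_split D_def ..
    also have "(\<Prod>i\<in>{1..m}. int (2*(m+1+i)-1)) = Q" unfolding Q_def
      by (rule prod.cong) auto
    finally show ?thesis by simp
  qed
  have s1: "[P * (2^(m+1) * E) * D = (-1)^m * 2^(m+1) * (Q * D)] (mod int p)"
    by (rule cong_subst[OF cong_mult[OF cong_mult[OF cong_refl t] cong_refl, of "2^(m+1)" D]])
       (simp_all only: ac_simps)
  have s2: "[P * (3^(m+1) * D) * D = (-1)^m * 2^(m+1) * OH] (mod int p)"
    using cong_trans[OF cong_sym[OF cong_mult[OF cong_mult[OF cong_refl x] cong_refl]] s1] DQ
    by (simp add: mult.commute)
  have s3: "[P^2 * 3^(2*m+2) * D^4 = 2^(2*m+2) * OH^2] (mod int p)"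
  proof -
    have h3: "(3::int)^(2*m+2) = 3^(m+1) * 3^(m+1)"
    proof -
      have "2*m+2 = (m+1)+(m+1)" by simp
      then show ?thesis by (simp only: power_add)
    qed
    have h2: "(2::int)^(2*m+2) = 2^(m+1) * 2^(m+1)"
    proof -
      have "2*m+2 = (m+1)+(m+1)" by simp
      then show ?thesis by (simp only: power_add)
    qed
    have hm: "(-1::int)^m * (-1)^m = 1" by (simp flip: power_mult_distrib)
    have a: "(P * (3^(m+1) * D) * D)^2 = P^2 * 3^(2*m+2) * D^4"
      unfolding h3 power2_eq_square power4_eq_xxxx by (simp only: ac_simps)
    have b: "((-1)^m * 2^(m+1) * OH)^2 = 2^(2*m+2) * (OH::int)^2"
    proof -
      have "((-1)^m * 2^(m+1) * OH)^2 = ((-1::int)^m * (-1)^m) * (2^(m+1) * 2^(m+1)) * (OH * OH)"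
        unfolding power2_eq_square by (simp only: ac_simps)
      then show ?thesis unfolding hm h2 power2_eq_square by simp
    qed
    show ?thesis using cong_pow[OF s2, of 2] unfolding a b .
  qed
  have oh: "[OH^2 = 1] (mod int p)"
  proof -
    have a: "OH * 2^(2*m+1) * fact (2*m+1) = (fact (p-1) :: int)" unfolding OH_def odd_prod
      using pm by (simp add: algebra_simps)
    have b: "[(OH * 2^(2*m+1) * fact (2*m+1))^2 = (-1)^2] (mod int p)"
      unfolding a by (rule cong_pow[OF wilson_theorem[OF pp]])
    have c1: "[2^(p-1) = (1::int)] (mod int p)" using fermat_int[OF pp, of 2] p_not_dvd_small[OF pp p3] by simp
    have c1': "(2::int)^(p-1) = (2^(2*m+1))^2" using pm by (simp add: power_mult[symmetric] algebra_simps)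
    have c3: "[(fact (2*m+1))^2 = (1::int)] (mod int p)"
      using fact_half_sq[OF pp oddp] unfolding hh by simp
    have "[OH^2 * (2^(2*m+1))^2 * (fact (2*m+1))^2 = 1] (mod int p)"
      using b by (simp add: power_mult_distrib)
    moreover have "[OH^2 * (2^(2*m+1))^2 * (fact (2*m+1))^2 = OH^2 * 1 * 1] (mod int p)"
      using c1 c3 unfolding c1' by (intro cong_mult cong_refl)
    ultimately show ?thesis by (metis cong_sym cong_trans mult_1_right)
  qed
  have d4: "[D^4 = B^2] (mod int p)" using D4_B2[OF pp p3 pm] unfolding D_def B_def .
  have s4a: "[P^2 * 3^(2*m+2) * B^2 = P^2 * 3^(2*m+2) * D^4] (mod int p)"
    by (rule cong_mult[OF cong_refl cong_sym[OF d4]])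
  have s4b: "[2^(2*m+2) * OH^2 = 2^(2*m+2) * 1] (mod int p)"
    by (rule cong_mult[OF cong_refl oh])
  have s4: "[P^2 * 3^(2*m+2) * B^2 = 2^(2*m+2) * 1] (mod int p)"
    using cong_trans[OF cong_trans[OF s4a s3] s4b] .
  have e5a: "(3::int)^(2*m+2) * 3^(2*m+1) = 3 * 3^(p-1)"
  proof -
    have "(2*m+2) + (2*m+1) = Suc (p-1)" using pm by simp
    then show ?thesis by (simp only: power_add[symmetric] power_Suc)
  qed
  have e5b: "(2::int)^(2*m+2) * 3^(2*m+1) = 2 * 6^(2*m+1)"
  proof -
    have "(2::int)^(2*m+2) = 2 * 2^(2*m+1)" by simp
    then show ?thesis by (simp add: power_mult_distrib[symmetric])
  qed
  have s5: "[3 * B^2 * P^2 * 3^(p-1) = 2 * 6^(2*m+1)] (mod int p)"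
  proof -
    have c0: "[P^2 * 3^(2*m+2) * B^2 * 3^(2*m+1) = 2^(2*m+2) * 1 * 3^(2*m+1)] (mod int p)"
      by (rule cong_mult[OF s4 cong_refl])
    have q1: "P^2 * 3^(2*m+2) * B^2 * 3^(2*m+1) = 3 * B^2 * P^2 * 3^(p-1)"
    proof -
      have "P^2 * 3^(2*m+2) * B^2 * 3^(2*m+1) = P^2 * B^2 * (3^(2*m+2) * 3^(2*m+1))" by (simp only: ac_simps)
      also have "\<dots> = P^2 * B^2 * (3 * 3^(p-1))" unfolding e5a ..
      finally show ?thesis by (simp only: ac_simps)
    qed
    have q2: "(2::int)^(2*m+2) * 1 * 3^(2*m+1) = 2 * 6^(2*m+1)" using e5b by simp
    show ?thesis using cong_subst[OF c0 q1[symmetric] q2[symmetric]] .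
  qed
  have fe: "[3^(p-1) = (1::int)] (mod int p)" using fermat_int[OF pp, of 3] p_not_dvd_small[OF pp p3] by simp
  have "[3 * B^2 * P^2 * 1 = 2 * 6^(2*m+1)] (mod int p)"
    using cong_trans[OF cong_sym[OF cong_mult[OF cong_refl fe]] s5] .
  then show ?thesis unfolding TP B_def by simp
qed



lemma leg_vals: "Legendre a p \<in> {-1, 0, 1}"
  unfolding Legendre_def by auto

lemma leg_nonzero: "\<not> p dvd a \<Longrightarrow> Legendre a p = 1 \<or> Legendre a p = -1"
  unfolding Legendre_def by (auto simp: cong_0_iff)

lemma leg3:
  assumes pp: "prime p" and p3: "p > 3" and p4: "p mod 4 = 1"
  shows "Legendre 3 (int p) = (if p mod 3 = 1 then 1 else -1)"
proof -
  have p3ne: "p \<noteq> 3" using p3 by simp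
  have qr: "Legendre (int p) (int 3) * Legendre (int 3) (int p) = (-1) ^ ((p - 1) div 2 * ((3 - 1) div 2))"
    by (rule Quadratic_Reciprocity) (use pp p3 in auto)
  have "even ((p - 1) div 2)" using p4 by presburger
  then have qr1: "Legendre (int p) 3 * Legendre 3 (int p) = 1" using qr by simp
  have eu: "[Legendre (int p) (int 3) = int p ^ ((3 - 1) div 2)] (mod int 3)"
    by (rule euler_criterion) auto
  then have eu': "[Legendre (int p) 3 = int p] (mod 3)" by simp
  have n3: "\<not> 3 dvd p"
  proof
    assume "3 dvd p" then have "p = 3" using pp by (metis prime_nat_iff numeral_eq_one_iff semiring_norm(86))
    then show False using p3 by simp
  qed
  have Lp: "Legendre (int p) 3 = (if p mod 3 = 1 then 1 else -1)"
  proof -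
    have "p mod 3 = 1 \<or> p mod 3 = 2" using n3 by presburger
    moreover have "Legendre (int p) 3 \<in> {-1,0,1}" by (rule leg_vals)
    moreover have r: "Legendre (int p) 3 mod 3 = int (p mod 3)" using eu' by (simp add: cong_def zmod_int)
    ultimately show ?thesis by auto
  qed
  have "Legendre (int p) 3 = 1 \<or> Legendre (int p) 3 = -1" using Lp by auto
  then have "Legendre 3 (int p) = Legendre (int p) 3" using qr1 by auto
  then show ?thesis using Lp by simp
qed

theorem theorem1p6:
  fixes p :: nat and \<delta> :: int
  assumes "prime p" and "p > 3" and "\<delta> \<in> {1, -1}"
  shows "(p mod 4 = 1 \<longrightarrow>
            [T p 2 (5 * \<delta>) 2 = (-1) ^ ((p + 11) div 12)] (mod int p))
       \<and> (p mod 4 = 3 \<longrightarrow>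
            (let B = int (((p - 3) div 2) choose ((p - 3) div 4)) in
              (\<delta> = 1 \<longrightarrow>
                 [3 * B^2 * T p 2 (5 * \<delta>) 2 = Legendre 6 (int p) * 2] (mod int p))
            \<and> (\<delta> = -1 \<longrightarrow>
                 [2 * T p 2 (5 * \<delta>) 2 = Legendre 6 (int p) * (-1) * 3 * B^2] (mod int p))))"
proof -
  note pp = assms(1) and p3 = assms(2)
  have Tpm: "[T p 2 5 2 * T p 2 (-5) 2 = (-1)^((p-1) div 2)] (mod int p)" by (rule T_pm[OF pp p3])
  have Tdel: "T p 2 (5 * \<delta>) 2 = (if \<delta> = 1 then T p 2 5 2 else T p 2 (-5) 2)"
    using assms(3) by auto
  have part1: "[T p 2 (5 * \<delta>) 2 = (-1) ^ ((p + 11) div 12)] (mod int p)" if p4: "p mod 4 = 1"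
  proof -
    define m where "m = p div 4"
    have pm: "p = 4*m+1" unfolding m_def using p4 by presburger
    have hh: "(p-1) div 2 = 2*m" using pm by simp
    define L3 where "L3 = Legendre 3 (int p)"
    define eps where "eps = - ((-1)^m * L3)"
    have t1: "[T p 2 5 2 = - (6^(2*m))] (mod int p)" by (rule T1_mod1[OF pp p3 pm])
    have e2: "[2^(2*m) = (-1::int)^m] (mod int p)" by (rule pow2_even[OF pp pm])
    have e3: "[3^(2*m) = L3] (mod int p)"
      using euler_criterion[OF pp, of 3] p3 unfolding L3_def hh by (simp add: cong_sym)
    have "[6^(2*m) = (-1::int)^m * L3] (mod int p)"
    proof -
      have "(6::int)^(2*m) = 2^(2*m) * 3^(2*m)" by (simp flip: power_mult_distrib)
      then show ?thesis using cong_mult[OF e2 e3] by simp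
    qed
    then have "[- (6^(2*m)) = eps] (mod int p)" unfolding eps_def by (rule cong_minus_minus_iff[THEN iffD2])
    then have t1e: "[T p 2 5 2 = eps] (mod int p)" using cong_trans[OF t1] by blast
    have L3v: "L3 = (if p mod 3 = 1 then 1 else -1)" unfolding L3_def by (rule leg3[OF pp p3 p4])
    have epsv: "eps = (-1) ^ ((p + 11) div 12)"
    proof -
      have n3: "p mod 3 \<noteq> 0"
      proof
        assume "p mod 3 = 0" then have "3 dvd p" by presburger
        then have "p = 3" using pp by (metis prime_nat_iff numeral_eq_one_iff semiring_norm(86))
        then show False using p3 by simp
      qed
      show ?thesis unfolding eps_def L3v minus_one_power_iff
        using pm n3 by (auto split: if_splits; presburger)
    qed
    have eps2: "eps * eps = 1" unfolding epsv by (simp flip: power_add add: minus_one_power_iff)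
    show ?thesis
    proof (cases "\<delta> = 1")
      case True then show ?thesis using t1e epsv Tdel by simp
    next
      case False
      have "[T p 2 5 2 * T p 2 (-5) 2 = 1] (mod int p)" using Tpm unfolding hh by simp
      then have "[eps * T p 2 (-5) 2 = 1] (mod int p)"
        using cong_trans[OF cong_mult[OF cong_sym[OF t1e] cong_refl]] by blast
      then have "[eps * (eps * T p 2 (-5) 2) = eps * 1] (mod int p)" by (rule cong_mult[OF cong_refl])
      then have "[T p 2 (-5) 2 = eps] (mod int p)" using eps2 by (simp add: mult.assoc[symmetric])
      then show ?thesis using epsv Tdel False by simp
    qed
  qed
  have part2: "(let B = int (((p - 3) div 2) choose ((p - 3) div 4)) in
              (\<delta> = 1 \<longrightarrow>
                 [3 * B^2 * T p 2 (5 * \<delta>) 2 = Legendre 6 (int p) * 2] (mod int p))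
            \<and> (\<delta> = -1 \<longrightarrow>
                 [2 * T p 2 (5 * \<delta>) 2 = Legendre 6 (int p) * (-1) * 3 * B^2] (mod int p)))"
    if p4: "p mod 4 = 3"
  proof -
    define m where "m = p div 4"
    have pm: "p = 4*m+3" unfolding m_def using p4 by presburger
    have hh: "(p-1) div 2 = 2*m+1" using pm by simp
    have b1: "(p - 3) div 2 = 2*m" "(p - 3) div 4 = m" using pm by auto
    define B where "B = int ((2*m) choose m)"
    define L6 where "L6 = Legendre 6 (int p)"
    have t1: "[3 * B^2 * T p 2 5 2 = 2 * 6^(2*m+1)] (mod int p)" unfolding B_def by (rule T1_mod3[OF pp p3 pm])
    have e6: "[6^(2*m+1) = L6] (mod int p)"
      using euler_criterion[OF pp, of 6] p3 unfolding L6_def hh by (simp add: cong_sym)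
    have c1: "[3 * B^2 * T p 2 5 2 = L6 * 2] (mod int p)"
      using cong_trans[OF t1 cong_mult[OF cong_refl e6, of 2]] by (simp add: mult.commute)
    have L6v: "L6 * L6 = 1"
    proof -
      have "\<not> int p dvd 6" using p_not_dvd_small[OF pp p3] by simp
      then have "L6 = 1 \<or> L6 = -1" unfolding L6_def by (rule leg_nonzero)
      then show ?thesis by auto
    qed
    have tm: "[T p 2 5 2 * T p 2 (-5) 2 = -1] (mod int p)" using Tpm unfolding hh by simp
    have c2: "[2 * T p 2 (-5) 2 = L6 * (-1) * 3 * B^2] (mod int p)"
    proof -
      have "[3 * B^2 * T p 2 5 2 * T p 2 (-5) 2 = L6 * 2 * T p 2 (-5) 2] (mod int p)"
        by (rule cong_mult[OF c1 cong_refl])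
      moreover have "[3 * B^2 * T p 2 5 2 * T p 2 (-5) 2 = 3 * B^2 * (-1)] (mod int p)"
        using cong_mult[OF cong_refl tm, of "3 * B^2"] by (simp add: mult.assoc)
      ultimately have "[L6 * 2 * T p 2 (-5) 2 = 3 * B^2 * (-1)] (mod int p)"
        using cong_trans cong_sym by blast
      then have X: "[L6 * (L6 * 2 * T p 2 (-5) 2) = L6 * (3 * B^2 * (-1))] (mod int p)"
        by (rule cong_mult[OF cong_refl])
      have Y: "L6 * (L6 * 2 * T p 2 (-5) 2) = 2 * T p 2 (-5) 2"
        using L6v by (simp add: mult.assoc[symmetric])
      have Z: "L6 * (3 * B^2 * (-1)) = L6 * (-1) * 3 * B^2" by (simp add: algebra_simps)
      show ?thesis using cong_subst[OF X Y[symmetric] Z[symmetric]] .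
    qed
    show ?thesis unfolding Let_def b1 using c1 c2 Tdel unfolding B_def L6_def by auto
  qed
  show ?thesis using part1 part2 by blast
qed


end
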